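(* Let $\Gamma$ be an ordered abelian group. The map $\Delta\mapsto\mathcal{O}_\Delta:=\{\infty\}\cup\{\gamma\in\Gamma:\gamma\in\Delta\text{ or }\gamma>\delta\text{ for all }\delta\in\Delta\}$ is a bijection between the convex subgroups of $\Gamma$ and the valuation hyperrings in the hyperfield $\mathcal{T}(\Gamma)$.
   Context: A hyperfield is $(F,+,\cdot,0,1)$ with $+$ a multivalued operation making $(F,+,0)$ a canonical hypergroup (associative, commutative, unique inverses $-x$ with $0\in x+(-x)$, and $z\in x+y\Rightarrow y\in z+(-x)$), $(F,\cdot)$ commutative with $0$ absorbing, $x(y+z)=xy+xz$ ($xA:=\{xa:a\in A\}$), and $F\setminus\{0\}$ an abelian group with neutral $1\neq0$. A hyperring is defined the same way without the unit/group requirement. For an ordered abelian group $(\Gamma,+,<,0)$ and $\infty>\Gamma$ with $\gamma+\infty=\infty+\gamma=\infty$, $\mathcal{T}(\Gamma)$ is the hyperfield on $\Gamma\cup\{\infty\}$ with multiplication $+$, zero $\infty$, unit $0$, and hyperaddition $x\boxplus\infty=\infty\boxplus x=\{x\}$, $x\boxplus y=\{\min\{x,y\}\}$ for $x\neq y$, $x\boxplus x=\{z:x\le z\le\infty\}$. A relational subhyperring of a hyperfield $F$ is a multiplicatively closed $S\subseteq F$ such that $(S,+_S,\cdot,0)$ is a hyperring with $x+_Sy:=(x+y)\cap S$. A valuation hyperring in $F$ is a relational subhyperring $\mathcal{O}$ such that for every non-zero $x\in F$, $x\in\mathcal{O}$ or $x^{-1}\in\mathcal{O}$. A subgroup $\Delta\le\Gamma$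 is convex if $\delta_1<\gamma<\delta_2$ with $\delta_i\in\Delta$ implies $\gamma\in\Delta$. *)

theory Defs
  imports Main
begin

definition hyperring :: "'a set \<Rightarrow> ('a \<Rightarrow> 'a \<Rightarrow> 'a set) \<Rightarrow> ('a \<Rightarrow> 'a \<Rightarrow> 'a) \<Rightarrow> 'a \<Rightarrow> bool" where
  "hyperring S add mul z \<longleftrightarrow>
     z \<in> S
   \<and> (\<forall>x\<in>S. \<forall>y\<in>S. add x y \<subseteq> S \<and> add x y \<noteq> {})
   \<and> (\<forall>x\<in>S. \<forall>y\<in>S. mul x y \<in> S)
   \<and> (\<forall>x\<in>S. \<forall>y\<in>S. \<forall>w\<in>S. (\<Union>a\<in>add x y. add a w) = (\<Union>b\<in>add y w. add x b))
   \<and> (\<forall>x\<in>S. \<forall>y\<in>S. add x y = add y x)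
   \<and> (\<forall>x\<in>S. add x z = {x})
   \<and> (\<forall>x\<in>S. \<exists>!x'. x' \<in> S \<and> z \<in> add x x')
   \<and> (\<forall>x\<in>S. \<forall>x'\<in>S. \<forall>y\<in>S. \<forall>w\<in>S. z \<in> add x x' \<longrightarrow> w \<in> add x y \<longrightarrow> y \<in> add w x')
   \<and> (\<forall>x\<in>S. \<forall>y\<in>S. mul x y = mul y x)
   \<and> (\<forall>x\<in>S. \<forall>y\<in>S. \<forall>w\<in>S. mul (mul x y) w = mul x (mul y w))
   \<and> (\<forall>x\<in>S. mul z x = z)
   \<and> (\<forall>x\<in>S. \<forall>y\<in>S. \<forall>w\<in>S. mul x ` add y w = add (mul x y) (mul x w))"

definition relational_subhyperring ::
  "('a \<Rightarrow> 'a \<Rightarrow> 'a set) \<Rightarrow> ('a \<Rightarrow> 'a \<Rightarrow> 'a) \<Rightarrow> 'a \<Rightarrow> 'a set \<Rightarrow> bool" where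
  "relational_subhyperring add mul z S \<longleftrightarrow>
     (\<forall>x\<in>S. \<forall>y\<in>S. mul x y \<in> S) \<and> hyperring S (\<lambda>x y. add x y \<inter> S) mul z"

definition valuation_hyperring ::
  "('a \<Rightarrow> 'a \<Rightarrow> 'a set) \<Rightarrow> ('a \<Rightarrow> 'a \<Rightarrow> 'a) \<Rightarrow> 'a \<Rightarrow> 'a \<Rightarrow> 'a set \<Rightarrow> bool" where
  "valuation_hyperring add mul z u R \<longleftrightarrow>
     relational_subhyperring add mul z R \<and>
     (\<forall>x. x \<noteq> z \<longrightarrow> x \<in> R \<or> (\<exists>y. mul x y = u \<and> y \<in> R))"

text \<open>Elements of T(\<Gamma>) are \<Gamma> \<union> {\<infinity>}, modelled as 'g option with None = \<infinity>.\<close>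

definition T_le :: "'g::linordered_ab_group_add option \<Rightarrow> 'g option \<Rightarrow> bool" where
  "T_le x y \<longleftrightarrow> (case (x, y) of
      (_, None) \<Rightarrow> True
    | (None, Some _) \<Rightarrow> False
    | (Some a, Some b) \<Rightarrow> a \<le> b)"

definition T_mul :: "'g::linordered_ab_group_add option \<Rightarrow> 'g option \<Rightarrow> 'g option" where
  "T_mul x y = (case (x, y) of (Some a, Some b) \<Rightarrow> Some (a + b) | _ \<Rightarrow> None)"

definition T_add :: "'g::linordered_ab_group_add option \<Rightarrow> 'g option \<Rightarrow> 'g option set" where
  "T_add x y = (if y = None then {x}
                else if x = None then {y}
                else if x \<noteq> y then {if T_le x y then x else y}
                else {w. T_le x w})"

abbreviation T_zero :: "'g::linordered_ab_group_add option" where "T_zero \<equiv> None"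
abbreviation T_one :: "'g::linordered_ab_group_add option" where "T_one \<equiv> Some 0"

definition add_subgroup :: "'g::ab_group_add set \<Rightarrow> bool" where
  "add_subgroup D \<longleftrightarrow> 0 \<in> D \<and> (\<forall>a\<in>D. \<forall>b\<in>D. a + b \<in> D) \<and> (\<forall>a\<in>D. - a \<in> D)"

definition convex_subgroup :: "'g::linordered_ab_group_add set \<Rightarrow> bool" where
  "convex_subgroup D \<longleftrightarrow> add_subgroup D \<and>
     (\<forall>d1\<in>D. \<forall>d2\<in>D. \<forall>g. d1 < g \<and> g < d2 \<longrightarrow> g \<in> D)"

definition O_of :: "'g::linordered_ab_group_add set \<Rightarrow> 'g option set" where
  "O_of D = insert None (Some ` {g. g \<in> D \<or> (\<forall>d\<in>D. g > d)})"

end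

theory Submission imports Defs begin

lemma T_le_simps[simp]:
  "T_le x None" "T_le None (Some b) = False" "T_le (Some a) (Some b) = (a \<le> b)"
  by (cases x; auto simp: T_le_def)+

lemma T_mul_simps[simp]:
  "T_mul None y = None" "T_mul x None = None" "T_mul (Some a) (Some b) = Some (a+b)"
  by (cases x; cases y; auto simp: T_mul_def)+

lemma T_add_None[simp]: "T_add x None = {x}" "T_add None x = {x}"
  by (auto simp: T_add_def)

lemma T_add_SS_mem: "v \<in> T_add (Some a) (Some b) \<longleftrightarrow> (if a = b then (case v of None \<Rightarrow> True | Some d \<Rightarrow> a \<le> d)
   else v = Some (min a b))"
  by (cases v) (auto simp: T_add_def T_le_def min_def split: option.splits)


definition P3 :: "'g::linordered_ab_group_add \<Rightarrow> 'g \<Rightarrow> 'g \<Rightarrow> 'g option \<Rightarrow> bool" where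
  "P3 a b c v = (let m = min a (min b c) in
     if (a = m \<and> b = m) \<or> (a = m \<and> c = m) \<or> (b = m \<and> c = m)
     then (case v of None \<Rightarrow> True | Some d \<Rightarrow> m \<le> d) else v = Some m)"

lemma LHS3_ne: assumes "a \<noteq> b"
  shows "v \<in> (\<Union>e\<in>T_add (Some a) (Some b). T_add e (Some c)) \<longleftrightarrow> P3 a b c v"
proof -
  have "T_add (Some a) (Some b) = {Some (min a b)}" using assms by (auto simp: T_add_SS_mem)
  then have "v \<in> (\<Union>e\<in>T_add (Some a) (Some b). T_add e (Some c)) \<longleftrightarrow> v \<in> T_add (Some (min a b)) (Some c)"
    by simp
  also have "\<dots> \<longleftrightarrow> P3 a b c v"
  proof -
    define m where "m = min a b"
    have mm: "min a (min b c) = min m c" unfolding m_def by (simp add: min.assoc)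
    have cond: "((a = min m c \<and> b = min m c) \<or> (a = min m c \<and> c = min m c) \<or> (b = min m c \<and> c = min m c))
       \<longleftrightarrow> m = c"
      using assms unfolding m_def min_def by auto
    show ?thesis unfolding P3_def Let_def mm cond m_def[symmetric] T_add_SS_mem
      by (cases v) (auto simp: min_def)
  qed
  finally show ?thesis .
qed

lemma LHS3_eq:
  shows "v \<in> (\<Union>e\<in>T_add (Some a) (Some a). T_add e (Some c)) \<longleftrightarrow> P3 a a c v"
proof -
  have "v \<in> (\<Union>e\<in>T_add (Some a) (Some a). T_add e (Some c)) \<longleftrightarrow>
        v = Some c \<or> (\<exists>d. a \<le> d \<and> v \<in> T_add (Some d) (Some c))" (is "?L \<longleftrightarrow> ?R")
  proof
    assume ?L
    then obtain e where e: "e \<in> T_add (Some a) (Some a)" "v \<in> T_add e (Some c)" by blast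
    show ?R
    proof (cases e)
      case None thus ?thesis using e by simp
    next
      case (Some d) thus ?thesis using e by (auto simp: T_add_SS_mem)
    qed
  next
    assume ?R
    then show ?L
    proof
      assume "v = Some c"
      moreover have "None \<in> T_add (Some a) (Some a)" by (simp add: T_add_SS_mem)
      ultimately show ?L by force
    next
      assume "\<exists>d. a \<le> d \<and> v \<in> T_add (Some d) (Some c)"
      then obtain d where "a \<le> d" "v \<in> T_add (Some d) (Some c)" by blast
      moreover have "Some d \<in> T_add (Some a) (Some a)" using \<open>a \<le> d\<close> by (simp add: T_add_SS_mem)
      ultimately show ?L by blast
    qed
  qed
  also have "\<dots> \<longleftrightarrow> P3 a a c v"
  proof (cases v)
    case None
    then show ?thesis unfolding T_add_SS_mem P3_def Let_def
      by (cases "a \<le> c") (auto simp: min_def)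
  next
    case (Some x)
    have "(\<exists>d. a \<le> d \<and> Some x \<in> T_add (Some d) (Some c)) \<longleftrightarrow>
          (\<exists>d. a \<le> d \<and> (if d = c then c \<le> x else x = min d c))"
      by (simp add: T_add_SS_mem)
    show ?thesis
    proof (cases "a \<le> c")
      case True
      have "P3 a a c v \<longleftrightarrow> a \<le> x" using True unfolding Some P3_def Let_def by (simp add: min_def)
      moreover have "(v = Some c \<or> (\<exists>d\<ge>a. v \<in> T_add (Some d) (Some c))) \<longleftrightarrow> a \<le> x"
      proof
        assume "v = Some c \<or> (\<exists>d\<ge>a. v \<in> T_add (Some d) (Some c))"
        then show "a \<le> x" unfolding Some using True \<open>_ = (\<exists>d\<ge>a. _)\<close>
          by (auto simp: min_def split: if_splits)
      next
        assume ax: "a \<le> x"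
        show "v = Some c \<or> (\<exists>d\<ge>a. v \<in> T_add (Some d) (Some c))"
        proof (cases "c \<le> x")
          case True
          then show ?thesis unfolding Some using \<open>a \<le> c\<close> by (intro disjI2 exI[of _ c]) (simp add: T_add_SS_mem)
        next
          case False
          then show ?thesis unfolding Some using ax by (intro disjI2 exI[of _ x]) (auto simp add: T_add_SS_mem min_def)
        qed
      qed
      ultimately show ?thesis by simp
    next
      case False
      have "P3 a a c v \<longleftrightarrow> x = c" using False unfolding Some P3_def Let_def by (auto simp add: min_def)
      moreover have "(v = Some c \<or> (\<exists>d\<ge>a. v \<in> T_add (Some d) (Some c))) \<longleftrightarrow> x = c"
        unfolding Some using False \<open>_ = (\<exists>d\<ge>a. _)\<close> by (auto simp: min_def)
      ultimately show ?thesis by simp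
    qed
  qed
  finally show ?thesis .
qed

lemma LHS3: "v \<in> (\<Union>e\<in>T_add (Some a) (Some b). T_add e (Some c)) \<longleftrightarrow> P3 a b c v"
proof (cases "a = b")
  case True thus ?thesis using LHS3_eq[where v=v and a=a and c=c] by simp
next
  case False thus ?thesis using LHS3_ne[where v=v and a=a and b=b and c=c] by simp
qed

lemma T_add_comm: "T_add x y = T_add y x"
  apply (cases x; cases y)
  apply simp_all
  apply (rule set_eqI)
  subgoal for a b v by (cases "a = b") (simp_all add: T_add_SS_mem min.commute)
  done

lemma P3_rot: "P3 a b c v = P3 b c a v"
proof -
  have e: "min b (min c a) = min a (min b c)" by (simp add: min.commute min.left_commute)
  obtain m where m: "min a (min b c) = m" by blast
  have "\<And>m. ((a = m \<and> b = m) \<or> (a = m \<and> c = m) \<or> (b = m \<and> c = m)) =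
     ((b = m \<and> c = m) \<or> (b = m \<and> a = m) \<or> (c = m \<and> a = m))" by blast
  then show ?thesis unfolding P3_def Let_def e m by presburger
qed

lemma T_add_assoc:
  fixes x y w :: "'g::linordered_ab_group_add option"
  shows "(\<Union>a\<in>T_add x y. T_add a w) = (\<Union>b\<in>T_add y w. T_add x b)"
proof (cases x)
  case None thus ?thesis by simp
next
  case (Some a) note xa = this
  show ?thesis
  proof (cases y)
    case None thus ?thesis by simp
  next
    case (Some b) note yb = this
    show ?thesis
    proof (cases w)
      case None thus ?thesis by simp
    next
      case (Some c)
      have "(\<Union>b\<in>T_add y w. T_add x b) = (\<Union>e\<in>T_add y w. T_add e x)"
        by (simp add: T_add_comm)
      then show ?thesis unfolding xa yb Some
      proof (intro set_eqI)
        fix v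
        assume "(\<Union>b\<in>T_add (Some b) (Some c). T_add (Some a) b) = (\<Union>e\<in>T_add (Some b) (Some c). T_add e (Some a))"
        then have "v \<in> (\<Union>b\<in>T_add (Some b) (Some c). T_add (Some a) b) \<longleftrightarrow> P3 b c a v"
          using LHS3[where v=v and a=b and b=c and c=a] by simp
        then show "v \<in> (\<Union>e\<in>T_add (Some a) (Some b). T_add e (Some c)) \<longleftrightarrow> v \<in> (\<Union>b\<in>T_add (Some b) (Some c). T_add (Some a) b)"
          using LHS3[where v=v and a=a and b=b and c=c] P3_rot[of a b c v] by simp
      qed
    qed
  qed
qed

lemma T_add_nonempty: "T_add x y \<noteq> {}"
proof (cases x; cases y)
  fix a b assume "x = Some a" "y = Some b"
  moreover have "Some (min a b) \<in> T_add (Some a) (Some b)" by (simp add: T_add_SS_mem)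
  ultimately show ?thesis by auto
qed auto

lemma T_add_inv: "None \<in> T_add x x' \<longleftrightarrow> x' = x"
  by (cases x; cases x') (auto simp: T_add_SS_mem)

lemma T_add_rev: "w \<in> T_add x y \<Longrightarrow> y \<in> T_add w x"
proof (cases x)
  case None thus "w \<in> T_add x y \<Longrightarrow> y \<in> T_add w x" by (cases y) auto
next
  case (Some a)
  assume w: "w \<in> T_add x y"
  show ?thesis
  proof (cases y)
    case None thus ?thesis using w Some by (auto simp: T_add_SS_mem)
  next
    case (Some b)
    show ?thesis
    proof (cases w)
      case None thus ?thesis using w \<open>x = Some a\<close> Some by (auto simp: T_add_SS_mem split: if_splits)
    next
      case (Some d)
      show ?thesis using w \<open>x = Some a\<close> \<open>y = Some b\<close> Some
        by (cases "a = b"; cases "d = a") (auto simp: T_add_SS_mem min_def split: if_splits)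
    qed
  qed
qed

lemma T_mul_comm: "T_mul x y = T_mul y x"
  by (cases x; cases y) (auto simp: add.commute)

lemma T_mul_assoc: "T_mul (T_mul x y) w = T_mul x (T_mul y w)"
  by (cases x; cases y; cases w) (auto simp: add.assoc)

lemma T_distrib: "T_mul x ` T_add y w = T_add (T_mul x y) (T_mul x w)"
proof (cases x)
  case None
  then show ?thesis using T_add_nonempty[of y w] by auto
next
  case (Some a)
  show ?thesis
  proof (cases y)
    case None thus ?thesis using Some by simp
  next
    case (Some b)
    show ?thesis
    proof (cases w)
      case None thus ?thesis using Some \<open>x = Some a\<close> by simp
    next
      case (Some c)
      show ?thesis
      proof (rule set_eqI)
        fix v
        show "v \<in> T_mul x ` T_add y w \<longleftrightarrow> v \<in> T_add (T_mul x y) (T_mul x w)"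
        proof (cases v)
          case None
          have "None \<in> T_mul x ` T_add y w \<longleftrightarrow> None \<in> T_add y w"
            using \<open>x = Some a\<close> by (auto simp: image_iff T_mul_def split: option.splits)
          thus ?thesis using None \<open>x = Some a\<close> \<open>y = Some b\<close> \<open>w = Some c\<close>
            by (simp add: T_add_SS_mem)
        next
          case (Some d)
          have "Some d \<in> T_mul x ` T_add y w \<longleftrightarrow> Some (d - a) \<in> T_add y w"
          proof
            assume "Some d \<in> T_mul x ` T_add y w"
            then obtain e where "e \<in> T_add y w" "Some d = T_mul x e" by blast
            then show "Some (d - a) \<in> T_add y w" using \<open>x = Some a\<close>
              by (cases e) auto
          next
            assume "Some (d - a) \<in> T_add y w"
            moreover have "Some d = T_mul x (Some (d - a))" using \<open>x = Some a\<close> by simp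
            ultimately show "Some d \<in> T_mul x ` T_add y w" by blast
          qed
          moreover have "min (a + b) (a + c) = a + min b c" by (simp add: min_def)
          ultimately show ?thesis using Some \<open>x = Some a\<close> \<open>y = Some b\<close> \<open>w = Some c\<close>
            by (auto simp add: T_add_SS_mem algebra_simps)
        qed
      qed
    qed
  qed
qed

definition upclosed :: "'g::linordered_ab_group_add option set \<Rightarrow> bool" where
  "upclosed R \<longleftrightarrow> (\<forall>g h. Some g \<in> R \<longrightarrow> g \<le> h \<longrightarrow> Some h \<in> R)"

lemma upclosed_add: "upclosed R \<Longrightarrow> None \<in> R \<Longrightarrow> x \<in> R \<Longrightarrow> y \<in> R \<Longrightarrow> T_add x y \<subseteq> R"
proof (cases x; cases y)
  fix a b assume xy: "x = Some a" "y = Some b" and u: "upclosed R" and N: "None \<in> R" and R: "x \<in> R" "y \<in> R"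
  show "T_add x y \<subseteq> R"
  proof
    fix v assume v: "v \<in> T_add x y"
    show "v \<in> R"
    proof (cases "a = b")
      case True
      then show ?thesis using v xy u N R unfolding upclosed_def
        by (cases v) (auto simp: T_add_SS_mem)
    next
      case False
      then have "v = Some (min a b)" using v xy by (simp add: T_add_SS_mem)
      then show ?thesis using R xy by (cases "a \<le> b") (auto simp: min_def)
    qed
  qed
qed auto


lemma rel_sub_T:
  assumes up: "upclosed R" and N: "None \<in> R" and M: "\<forall>x\<in>R. \<forall>y\<in>R. T_mul x y \<in> R"
  shows "relational_subhyperring T_add T_mul None R"
proof -
  have A: "\<And>x y. x \<in> R \<Longrightarrow> y \<in> R \<Longrightarrow> T_add x y \<inter> R = T_add x y"
    using upclosed_add[OF up N] by blast
  let ?a = "\<lambda>x y. T_add x y \<inter> R"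
  have h2: "\<forall>x\<in>R. \<forall>y\<in>R. ?a x y \<subseteq> R \<and> ?a x y \<noteq> {}"
    using upclosed_add[OF up N] by (simp add: A T_add_nonempty)
  have h4: "\<forall>x\<in>R. \<forall>y\<in>R. \<forall>w\<in>R. (\<Union>a\<in>?a x y. ?a a w) = (\<Union>b\<in>?a y w. ?a x b)"
  proof (intro ballI)
    fix x y w assume R: "x \<in> R" "y \<in> R" "w \<in> R"
    have s1: "T_add x y \<subseteq> R" "T_add y w \<subseteq> R" using upclosed_add[OF up N] R by auto
    have "(\<Union>a\<in>T_add x y \<inter> R. T_add a w \<inter> R) = (\<Union>a\<in>T_add x y. T_add a w)"
      using A R s1 by (intro SUP_cong) auto
    also have "\<dots> = (\<Union>b\<in>T_add y w. T_add x b)" by (rule T_add_assoc)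
    also have "\<dots> = (\<Union>b\<in>T_add y w \<inter> R. T_add x b \<inter> R)"
    proof (rule SUP_cong)
      show "T_add y w = T_add y w \<inter> R" using s1 by blast
      fix b assume "b \<in> T_add y w \<inter> R"
      then show "T_add x b = T_add x b \<inter> R" using A[of x b] R by simp
    qed
    finally show "(\<Union>a\<in>T_add x y \<inter> R. T_add a w \<inter> R) = (\<Union>b\<in>T_add y w \<inter> R. T_add x b \<inter> R)" .
  qed
  have h5: "\<forall>x\<in>R. \<forall>y\<in>R. ?a x y = ?a y x" using T_add_comm by metis
  have h6: "\<forall>x\<in>R. ?a x None = {x}" by simp
  have h7: "\<forall>x\<in>R. \<exists>!x'. x' \<in> R \<and> None \<in> ?a x x'"
  proof
    fix x assume "x \<in> R"
    show "\<exists>!x'. x' \<in> R \<and> None \<in> ?a x x'"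
    proof (rule ex1I[of _ x])
      show "x \<in> R \<and> None \<in> ?a x x" using \<open>x \<in> R\<close> N T_add_inv[of x x] by simp
      fix x' assume "x' \<in> R \<and> None \<in> ?a x x'"
      then show "x' = x" using T_add_inv[of x x'] by simp
    qed
  qed
  have h8: "\<forall>x\<in>R. \<forall>x'\<in>R. \<forall>y\<in>R. \<forall>w\<in>R. None \<in> ?a x x' \<longrightarrow> w \<in> ?a x y \<longrightarrow> y \<in> ?a w x'"
  proof (intro ballI impI)
    fix x x' y w assume "x \<in> R" "x' \<in> R" "y \<in> R" "w \<in> R" and n: "None \<in> ?a x x'" and w: "w \<in> ?a x y"
    have "x' = x" using n T_add_inv[of x x'] by simp
    then show "y \<in> ?a w x'" using T_add_rev[of w x y] w \<open>y \<in> R\<close> by simp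
  qed
  have h9: "\<forall>x\<in>R. \<forall>y\<in>R. T_mul x y = T_mul y x" using T_mul_comm by blast
  have h10: "\<forall>x\<in>R. \<forall>y\<in>R. \<forall>w\<in>R. T_mul (T_mul x y) w = T_mul x (T_mul y w)" using T_mul_assoc by blast
  have h11: "\<forall>x\<in>R. T_mul None x = None" by simp
  have h12: "\<forall>x\<in>R. \<forall>y\<in>R. \<forall>w\<in>R. T_mul x ` ?a y w = ?a (T_mul x y) (T_mul x w)"
  proof (intro ballI)
    fix x y w assume R: "x \<in> R" "y \<in> R" "w \<in> R"
    have "T_mul x y \<in> R" "T_mul x w \<in> R" using M R by auto
    then show "T_mul x ` (T_add y w \<inter> R) = T_add (T_mul x y) (T_mul x w) \<inter> R"
      using A[of y w] A[of "T_mul x y" "T_mul x w"] R T_distrib[of x y w] by simp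
  qed
  show ?thesis unfolding relational_subhyperring_def hyperring_def
    apply (intro conjI)
    apply (fact M) apply (fact N) apply (fact h2) apply (fact M) apply (fact h4) apply (fact h5)
    apply (fact h6) apply (fact h7) apply (fact h8) apply (fact h9) apply (fact h10) apply (fact h11)
    apply (fact h12)
    done
qed

lemma O_mem: "Some g \<in> O_of D \<longleftrightarrow> g \<in> D \<or> (\<forall>d\<in>D. d < g)" "None \<in> O_of D"
  unfolding O_of_def by (simp_all add: image_iff)

lemma conv_facts:
  assumes "convex_subgroup D"
  shows "0 \<in> D" "\<And>a b. a \<in> D \<Longrightarrow> b \<in> D \<Longrightarrow> a + b \<in> D" "\<And>a. a \<in> D \<Longrightarrow> -a \<in> D"
    "\<And>d1 d2 g. d1 \<in> D \<Longrightarrow> d2 \<in> D \<Longrightarrow> d1 \<le> g \<Longrightarrow> g \<le> d2 \<Longrightarrow> g \<in> D"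
proof -
  have c: "\<forall>d1\<in>D. \<forall>d2\<in>D. \<forall>g. d1 < g \<and> g < d2 \<longrightarrow> g \<in> D"
    using assms unfolding convex_subgroup_def by (rule conjunct2)
  have s: "add_subgroup D" using assms unfolding convex_subgroup_def by (rule conjunct1)
  have s0: "0 \<in> D" and s1: "\<forall>a\<in>D. \<forall>b\<in>D. a + b \<in> D" and s2: "\<forall>a\<in>D. - a \<in> D"
    using s unfolding add_subgroup_def by simp_all
  show "0 \<in> D" by (fact s0)
  show "\<And>a b. a \<in> D \<Longrightarrow> b \<in> D \<Longrightarrow> a + b \<in> D" using s1 by blast
  show "\<And>a. a \<in> D \<Longrightarrow> -a \<in> D" using s2 by blast
  fix d1 d2 g assume "d1 \<in> D" "d2 \<in> D" "d1 \<le> g" "g \<le> d2"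
  then show "g \<in> D"
  proof (cases "g = d1 \<or> g = d2")
    case True thus ?thesis using \<open>d1 \<in> D\<close> \<open>d2 \<in> D\<close> by blast
  next
    case False
    then have "d1 < g" "g < d2" using \<open>d1 \<le> g\<close> \<open>g \<le> d2\<close> le_neq_trans by auto
    then show ?thesis using c \<open>d1 \<in> D\<close> \<open>d2 \<in> D\<close> by blast
  qed
qed

lemma O_up: assumes "convex_subgroup D" shows "upclosed (O_of D)"
  unfolding upclosed_def O_mem
proof (intro allI impI)
  fix g h :: 'a assume g: "g \<in> D \<or> (\<forall>d\<in>D. d < g)" and gh: "g \<le> h"
  show "h \<in> D \<or> (\<forall>d\<in>D. d < h)"
  proof (rule ccontr)
    assume "\<not> ?thesis"
    then obtain d where d: "d \<in> D" "h \<le> d" "h \<notin> D" by (auto simp: not_less)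
    have "g \<in> D"
    proof (rule ccontr)
      assume "g \<notin> D"
      then have "d < g" using g d(1) by blast
      then show False using gh d(2) by simp
    qed
    then show False using conv_facts(4)[OF assms \<open>g \<in> D\<close> d(1) gh d(2)] d(3) by blast
  qed
qed

lemma O_mul: assumes "convex_subgroup D" shows "\<forall>x\<in>O_of D. \<forall>y\<in>O_of D. T_mul x y \<in> O_of D"
proof (intro ballI)
  fix x y assume x: "x \<in> O_of D" and y: "y \<in> O_of D"
  show "T_mul x y \<in> O_of D"
  proof (cases x; cases y)
    fix a b assume xy: "x = Some a" "y = Some b"
    have a: "a \<in> D \<or> (\<forall>d\<in>D. d < a)" and b: "b \<in> D \<or> (\<forall>d\<in>D. d < b)"
      using x y by (simp_all add: xy O_mem)
    have z: "0 \<in> D" using conv_facts(1)[OF assms] .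
    have "a + b \<in> D \<or> (\<forall>d\<in>D. d < a + b)"
    proof (cases "a \<in> D")
      case aD: True
      show ?thesis
      proof (cases "b \<in> D")
        case True thus ?thesis using aD conv_facts(2)[OF assms] by blast
      next
        case False
        then have "\<forall>d\<in>D. d < b" using b by blast
        then have "\<forall>d\<in>D. d < a + b"
        proof (intro ballI)
          fix d assume "\<forall>d\<in>D. d < b" "d \<in> D"
          then have "d + - a \<in> D" using conv_facts(2)[OF assms _ conv_facts(3)[OF assms aD]] by blast
          then have "d + - a < b" using \<open>\<forall>d\<in>D. d < b\<close> by blast
          then show "d < a + b" by (simp add: algebra_simps)
        qed
        thus ?thesis by blast
      qed
    next
      case False
      then have A: "\<forall>d\<in>D. d < a" using a by blast
      then have "0 < a" using z by blast
      show ?thesis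
      proof (cases "b \<in> D")
        case bD: True
        have "\<forall>d\<in>D. d < a + b"
        proof (intro ballI)
          fix d assume "d \<in> D"
          then have "d + - b \<in> D" using conv_facts(2)[OF assms _ conv_facts(3)[OF assms bD]] by blast
          then have "d + - b < a" using A by blast
          then show "d < a + b" by (simp add: algebra_simps)
        qed
        thus ?thesis by blast
      next
        case False
        then have B: "\<forall>d\<in>D. d < b" using b by blast
        have "\<forall>d\<in>D. d < a + b"
        proof (intro ballI)
          fix d assume "d \<in> D"
          then have "d < b" using B by blast
          also have "b < a + b" using \<open>0 < a\<close> by simp
          finally show "d < a + b" .
        qed
        thus ?thesis by blast
      qed
    qed
    then show ?thesis by (simp add: xy O_mem)
  qed (auto simp: O_mem)
qed

lemma O_val: assumes "convex_subgroup D" shows "valuation_hyperring T_add T_mul None (Some 0) (O_of D)"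
  unfolding valuation_hyperring_def
proof (intro conjI allI impI)
  show "relational_subhyperring T_add T_mul T_zero (O_of D)"
    by (rule rel_sub_T[OF O_up[OF assms] O_mem(2) O_mul[OF assms]])
  fix x :: "'a option" assume "x \<noteq> None"
  then obtain g where g: "x = Some g" by auto
  show "x \<in> O_of D \<or> (\<exists>y. T_mul x y = Some 0 \<and> y \<in> O_of D)"
  proof (cases "x \<in> O_of D")
    case False
    then have "g \<notin> D" "\<not> (\<forall>d\<in>D. d < g)" using g by (simp_all add: O_mem)
    then obtain d where d: "d \<in> D" "g \<le> d" by (auto simp: not_less)
    have "-d \<in> D" using conv_facts(3)[OF assms d(1)] .
    then have "Some (-d) \<in> O_of D" by (simp add: O_mem)
    moreover have "-d \<le> -g" using d by simp
    ultimately have "Some (-g) \<in> O_of D" using O_up[OF assms] unfolding upclosed_def by blast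
    then show ?thesis using g by (intro disjI2 exI[of _ "Some (-g)"]) simp
  qed simp
qed

lemma O_units: assumes "convex_subgroup D" shows "D = {g. Some g \<in> O_of D \<and> Some (-g) \<in> O_of D}"
proof (intro set_eqI iffI)
  fix g assume "g \<in> D"
  moreover have "-g \<in> D" using conv_facts(3)[OF assms \<open>g \<in> D\<close>] .
  ultimately show "g \<in> {g. Some g \<in> O_of D \<and> Some (-g) \<in> O_of D}"
    by (simp add: O_mem)
next
  fix g assume "g \<in> {g. Some g \<in> O_of D \<and> Some (-g) \<in> O_of D}"
  then have a: "g \<in> D \<or> (\<forall>d\<in>D. d < g)" and b: "-g \<in> D \<or> (\<forall>d\<in>D. d < -g)"
    by (simp_all add: O_mem)
  have z: "0 \<in> D" using conv_facts(1)[OF assms] .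
  show "g \<in> D"
  proof (rule ccontr)
    assume "g \<notin> D"
    then have "0 < g" using a z by blast
    moreover have "-g \<notin> D"
    proof
      assume "-g \<in> D"
      then have "- (-g) \<in> D" by (rule conv_facts(3)[OF assms])
      then show False using \<open>g \<notin> D\<close> by simp
    qed
    then have "0 < -g" using b z by blast
    ultimately show False by simp
  qed
qed

lemma mul_one_inv: "T_mul (Some c) y = Some 0 \<Longrightarrow> y = Some (-c)"
proof (cases y)
  case None
  assume "T_mul (Some c) y = Some 0" thus ?thesis using None by simp
next
  case (Some b)
  assume "T_mul (Some c) y = Some 0"
  then have "c + b = 0" using Some by simp
  then have "-c = b" by (rule add.inverse_unique)
  thus ?thesis using Some by simp
qed

lemma val_props:
  assumes V: "valuation_hyperring T_add T_mul None (Some 0) R"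
  shows "None \<in> R" "Some 0 \<in> R" "upclosed R" "\<forall>x\<in>R. \<forall>y\<in>R. T_mul x y \<in> R"
    "\<And>c. Some c \<notin> R \<Longrightarrow> Some (-c) \<in> R"
proof -
  have M: "\<forall>x\<in>R. \<forall>y\<in>R. T_mul x y \<in> R" and H: "hyperring R (\<lambda>x y. T_add x y \<inter> R) T_mul None"
   and VV: "\<forall>x. x \<noteq> None \<longrightarrow> x \<in> R \<or> (\<exists>y. T_mul x y = Some 0 \<and> y \<in> R)"
    using V unfolding valuation_hyperring_def relational_subhyperring_def by (blast, blast, blast)
  show N: "None \<in> R" using H unfolding hyperring_def by (elim conjE)
  have Dist: "\<forall>x\<in>R. \<forall>y\<in>R. \<forall>w\<in>R. T_mul x ` (T_add y w \<inter> R) = T_add (T_mul x y) (T_mul x w) \<inter> R"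
    using H unfolding hyperring_def by (elim conjE)
  show M': "\<forall>x\<in>R. \<forall>y\<in>R. T_mul x y \<in> R" by (fact M)
  show inv: "\<And>c. Some c \<notin> R \<Longrightarrow> Some (-c) \<in> R"
  proof -
    fix c assume "Some c \<notin> R"
    then obtain y where "T_mul (Some c) y = Some 0" "y \<in> R" using VV by blast
    then show "Some (-c) \<in> R" using mul_one_inv by blast
  qed
  show "Some 0 \<in> R"
  proof (rule ccontr)
    assume "Some 0 \<notin> R"
    then have "Some (-0) \<in> R" by (rule inv)
    then show False using \<open>Some 0 \<notin> R\<close> by simp
  qed
  then have one: "Some 0 \<in> R" .
  show "upclosed R" unfolding upclosed_def
  proof (intro allI impI)
    fix a c assume a: "Some a \<in> R" and ac: "a \<le> c"
    show "Some c \<in> R"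
    proof (rule ccontr)
      assume nc: "Some c \<notin> R"
      then have mc: "Some (-c) \<in> R" by (rule inv)
      have "Some 0 \<in> T_add (Some (-c + a)) (Some (-c + a)) \<inter> R"
        using ac one by (simp add: T_add_SS_mem)
      also have "\<dots> = T_mul (Some (-c)) ` (T_add (Some a) (Some a) \<inter> R)"
        using Dist[rule_format, OF mc a a] by simp
      finally obtain e where e: "e \<in> T_add (Some a) (Some a) \<inter> R" "Some 0 = T_mul (Some (-c)) e" by blast
      then obtain e' where "e = Some e'" by (cases e) auto
      with e have "-c + e' = 0" "e \<in> R" by simp_all
      then have "e' = c" using add.inverse_unique[of "-c" e'] by simp
      then show False using nc \<open>e = Some e'\<close> \<open>e \<in> R\<close> by simp
    qed
  qed
qed

lemma val_conv:
  assumes V: "valuation_hyperring T_add T_mul None (Some 0) R"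
  defines "D \<equiv> {g. Some g \<in> R \<and> Some (-g) \<in> R}"
  shows "convex_subgroup D" "O_of D = R"
proof -
  note P = val_props[OF V]
  have up: "\<And>g h. Some g \<in> R \<Longrightarrow> g \<le> h \<Longrightarrow> Some h \<in> R" using P(3) unfolding upclosed_def by blast
  have mul: "\<And>a b. Some a \<in> R \<Longrightarrow> Some b \<in> R \<Longrightarrow> Some (a + b) \<in> R"
  proof -
    fix a b assume "Some a \<in> R" "Some b \<in> R"
    then have "T_mul (Some a) (Some b) \<in> R" using P(4) by blast
    then show "Some (a + b) \<in> R" by simp
  qed
  have D0: "0 \<in> D" using P(2) unfolding D_def by simp
  show "convex_subgroup D" unfolding convex_subgroup_def add_subgroup_def
  proof (intro conjI ballI allI impI D0)
    fix a b assume "a \<in> D" "b \<in> D"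
    then have "Some a \<in> R" "Some b \<in> R" "Some (-a) \<in> R" "Some (-b) \<in> R" unfolding D_def by auto
    then have "Some (a + b) \<in> R" "Some (-a + -b) \<in> R" using mul by blast+
    then show "a + b \<in> D" unfolding D_def by (simp add: add.commute)
  next
    fix a assume "a \<in> D" then show "-a \<in> D" unfolding D_def by simp
  next
    fix d1 d2 g assume "d1 \<in> D" "d2 \<in> D" "d1 < g \<and> g < d2"
    then have "Some d1 \<in> R" "Some (-d2) \<in> R" "d1 \<le> g" "-d2 \<le> -g" unfolding D_def by auto
    then have "Some g \<in> R" "Some (-g) \<in> R" using up by blast+
    then show "g \<in> D" unfolding D_def by simp
  qed
  show "O_of D = R"
  proof (rule set_eqI)
    fix x show "x \<in> O_of D \<longleftrightarrow> x \<in> R"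
    proof (cases x)
      case None thus ?thesis using P(1) O_mem(2) by simp
    next
      case (Some g)
      have "g \<in> D \<or> (\<forall>d\<in>D. d < g) \<longleftrightarrow> Some g \<in> R"
      proof
        assume "g \<in> D \<or> (\<forall>d\<in>D. d < g)"
        then show "Some g \<in> R"
        proof
          assume "g \<in> D" thus ?thesis unfolding D_def by simp
        next
          assume "\<forall>d\<in>D. d < g"
          then have "0 \<le> g" using D0 by (simp add: less_imp_le)
          then show ?thesis using up[OF P(2)] by blast
        qed
      next
        assume g: "Some g \<in> R"
        show "g \<in> D \<or> (\<forall>d\<in>D. d < g)"
        proof (cases "Some (-g) \<in> R")
          case True thus ?thesis using g unfolding D_def by simp
        next
          case False
          have "\<forall>d\<in>D. d < g"
          proof
            fix d assume "d \<in> D"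
            show "d < g"
            proof (rule ccontr)
              assume "\<not> d < g"
              then have "-d \<le> -g" by simp
              moreover have "Some (-d) \<in> R" using \<open>d \<in> D\<close> unfolding D_def by simp
              ultimately show False using up False by blast
            qed
          qed
          thus ?thesis by blast
        qed
      qed
      then show ?thesis using Some by (simp add: O_mem)
    qed
  qed
qed

theorem mainTheorem16:
  fixes \<Gamma>_witness :: "'g::linordered_ab_group_add itself"
  shows "bij_betw (O_of :: 'g set \<Rightarrow> 'g option set)
           {D. convex_subgroup D}
           {R. valuation_hyperring T_add T_mul T_zero T_one R}"
  unfolding bij_betw_def
proof
  show "inj_on (O_of :: 'g set \<Rightarrow> 'g option set) {D. convex_subgroup D}"
  proof (rule inj_onI)
    fix D1 D2 :: "'g set" assume "D1 \<in> {D. convex_subgroup D}" "D2 \<in> {D. convex_subgroup D}" "O_of D1 = O_of D2"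
    then show "D1 = D2" using O_units by (metis mem_Collect_eq)
  qed
  show "O_of ` {D. convex_subgroup D} = {R. valuation_hyperring T_add T_mul T_zero T_one (R :: 'g option set)}"
  proof (intro equalityI subsetI)
    fix R assume "R \<in> O_of ` {D. convex_subgroup D}"
    then show "R \<in> {R. valuation_hyperring T_add T_mul T_zero T_one R}" using O_val by blast
  next
    fix R :: "'g option set" assume "R \<in> {R. valuation_hyperring T_add T_mul T_zero T_one R}"
    then have V: "valuation_hyperring T_add T_mul None (Some 0) R" by simp
    show "R \<in> O_of ` {D. convex_subgroup D}"
      using val_conv[OF V] by (metis (no_types, lifting) image_eqI mem_Collect_eq)
  qed
qed
end
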